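(* Let $T>0$, $0<\eta<T$, $0<\alpha<\frac{1}{\eta}$, let $f\in C([0,\infty),[0,\infty))$, and let $a\in C([0,T],[0,\infty))$ with $a(t_0)>0$ for some $t_0\in[0,T]$. Consider the boundary value problem \[ u''(t)+a(t)f(u(t))=0,\quad 0<t<T,\qquad u'(0)=0,\quad u(T)=\alpha\int_0^{\eta}u(s)\,ds. \tag{P} \] Assume that $f_0=\alpha_2\in\left(\frac{\theta_2}{\gamma}\Lambda_2,\infty\right)$ for some $\theta_2\ge1$, and $f_\infty=\beta_2\in[0,\theta_1\Lambda_1)$ for some $\theta_1\in(0,1]$. Then (P) has at least one positive solution.
   Context: $f_0=\lim_{u\to0^+}\frac{f(u)}{u}$, $f_\infty=\lim_{u\to\infty}\frac{f(u)}{u}$ (assumed to exist with the stated values; $\alpha_2,\beta_2$ are just names for these limits). $\gamma=\dfrac{\alpha\eta(T-\eta)}{T-\alpha\eta^2}$, $\Lambda_1=\dfrac{1-\alpha\eta}{\int_0^T (T-s)a(s)\,ds}$, and $\Lambda_2=\dfrac{1-\alpha\eta}{\gamma\left(\int_\eta^T (T-s)a(s)\,ds+\frac12\int_0^\eta\left[2(T-\eta)+\alpha(\eta^2-s^2)\right]a(s)\,ds\right)}$. A positive solution of (P) is a function $u\in C^2([0,T])$ satisfying (P) with $u(t)\ge0$ on $[0,T]$ and $u$ not identically zero. *)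

theory Defs
  imports "HOL-Analysis.Analysis"
begin

definition gamma_c :: "real \<Rightarrow> real \<Rightarrow> real \<Rightarrow> real" where
  "gamma_c T \<eta> \<alpha> = \<alpha> * \<eta> * (T - \<eta>) / (T - \<alpha> * \<eta>^2)"

definition Lambda1 :: "real \<Rightarrow> real \<Rightarrow> real \<Rightarrow> (real \<Rightarrow> real) \<Rightarrow> real" where
  "Lambda1 T \<eta> \<alpha> a = (1 - \<alpha> * \<eta>) / integral {0..T} (\<lambda>s. (T - s) * a s)"

definition Lambda2 :: "real \<Rightarrow> real \<Rightarrow> real \<Rightarrow> (real \<Rightarrow> real) \<Rightarrow> real" where
  "Lambda2 T \<eta> \<alpha> a = (1 - \<alpha> * \<eta>) /
     (gamma_c T \<eta> \<alpha> * (integral {\<eta>..T} (\<lambda>s. (T - s) * a s)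
        + 1/2 * integral {0..\<eta>} (\<lambda>s. (2 * (T - \<eta>) + \<alpha> * (\<eta>^2 - s^2)) * a s)))"

definition C2_with :: "real \<Rightarrow> (real \<Rightarrow> real) \<Rightarrow> (real \<Rightarrow> real) \<Rightarrow> (real \<Rightarrow> real) \<Rightarrow> bool" where
  "C2_with T u u1 u2 \<longleftrightarrow>
     (\<forall>t\<in>{0..T}. (u has_real_derivative u1 t) (at t within {0..T})) \<and>
     (\<forall>t\<in>{0..T}. (u1 has_real_derivative u2 t) (at t within {0..T})) \<and>
     continuous_on {0..T} u2"

definition positive_solution ::
  "real \<Rightarrow> real \<Rightarrow> real \<Rightarrow> (real \<Rightarrow> real) \<Rightarrow> (real \<Rightarrow> real) \<Rightarrow> (real \<Rightarrow> real) \<Rightarrow> bool" where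
  "positive_solution T \<eta> \<alpha> a f u \<longleftrightarrow>
     (\<exists>u1 u2. C2_with T u u1 u2 \<and>
        (\<forall>t. 0 < t \<and> t < T \<longrightarrow> u2 t + a t * f (u t) = 0) \<and>
        u1 0 = 0 \<and>
        u T = \<alpha> * integral {0..\<eta>} u) \<and>
     (\<forall>t\<in>{0..T}. u t \<ge> 0) \<and> (\<exists>t\<in>{0..T}. u t \<noteq> 0)"

end

theory Submission
  imports Defs "HOL-Complex_Analysis.Great_Picard"
begin

lemma ftc_int:
  fixes g :: "real \<Rightarrow> real"
  assumes "continuous_on {x0..b} g" "t \<in> {x0..b}"
  shows "((\<lambda>x. integral {x0..x} g) has_real_derivative g t) (at t within {x0..b})"
  using integral_has_vector_derivative[OF assms] has_real_derivative_iff_has_vector_derivative by blast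

lemma int_bound_le:
  fixes g :: "real \<Rightarrow> real"
  assumes "x \<le> y" "continuous_on {x..y} g" "\<And>t. t \<in> {x..y} \<Longrightarrow> g t \<le> B"
  shows "integral {x..y} g \<le> B * (y - x)"
proof -
  have "integral {x..y} g \<le> integral {x..y} (\<lambda>t. B)"
    by (rule integral_le) (auto intro: integrable_continuous_interval assms)
  then show ?thesis using assms(1) by (simp add: mult.commute)
qed

lemma int_bound_ge:
  fixes g :: "real \<Rightarrow> real"
  assumes "x \<le> y" "continuous_on {x..y} g" "\<And>t. t \<in> {x..y} \<Longrightarrow> B \<le> g t"
  shows "B * (y - x) \<le> integral {x..y} g"
proof -
  have "integral {x..y} (\<lambda>t. B) \<le> integral {x..y} g"
    by (rule integral_le) (auto intro: integrable_continuous_interval assms)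
  then show ?thesis using assms(1) by (simp add: mult.commute)
qed

lemma cont_sub: fixes g :: "real \<Rightarrow> real" shows "continuous_on {0..T} g \<Longrightarrow> 0 \<le> x \<Longrightarrow> y \<le> T \<Longrightarrow> continuous_on {x..y} g"
  by (erule continuous_on_subset) auto

lemma int_sub: fixes g :: "real \<Rightarrow> real" shows "continuous_on {0..T} g \<Longrightarrow> 0 \<le> x \<Longrightarrow> y \<le> T \<Longrightarrow> g integrable_on {x..y}"
  by (rule integrable_continuous_interval, rule cont_sub)

lemma int_abs_bound:
  fixes g :: "real \<Rightarrow> real"
  assumes "x \<le> y" "continuous_on {x..y} g" "\<And>t. t \<in> {x..y} \<Longrightarrow> \<bar>g t\<bar> \<le> B"
  shows "\<bar>integral {x..y} g\<bar> \<le> B * (y - x)"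
  using integral_bound[OF assms(1,2), of B] assms(3) by auto

lemma dmc: "(x::real) \<noteq> 0 \<Longrightarrow> y / x * x = y" by simp

lemma ftc_eq:
  fixes g Gf :: "real \<Rightarrow> real"
  assumes "x \<le> y" "\<And>t. t \<in> {x..y} \<Longrightarrow> (Gf has_real_derivative g t) (at t within {x..y})"
  shows "integral {x..y} g = Gf y - Gf x"
proof -
  have "(g has_integral Gf y - Gf x) {x..y}"
    by (rule fundamental_theorem_of_calculus[OF assms(1)]) (use assms(2) has_real_derivative_iff_has_vector_derivative in blast)
  then show ?thesis by (rule integral_unique)
qed

locale bvp =
  fixes T \<eta> \<alpha> :: real and a f :: "real \<Rightarrow> real"
  assumes T_pos: "T > 0" and eta_pos: "0 < \<eta>" and eta_lt: "\<eta> < T"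
    and alpha_pos: "0 < \<alpha>" and alpha_eta: "\<alpha> * \<eta> < 1"
    and f_cont: "continuous_on {0..} f" and f_nn: "\<And>x. x \<ge> 0 \<Longrightarrow> f x \<ge> 0"
    and a_cont: "continuous_on {0..T} a" and a_nn: "\<And>t. t \<in> {0..T} \<Longrightarrow> a t \<ge> 0"
begin

definition F :: "real \<Rightarrow> real" where "F x = f (max x 0)"

lemma F_cont: "continuous_on UNIV F"
  unfolding F_def[abs_def]
  by (rule continuous_on_compose2[OF f_cont]) (auto intro!: continuous_intros)

lemma F_comp: "continuous_on S g \<Longrightarrow> continuous_on S (\<lambda>x. F (g x))"
  by (rule continuous_on_compose2[OF F_cont]) auto

lemma F_nn: "F x \<ge> 0"
  unfolding F_def by (rule f_nn) simp

lemma F_eq: "x \<ge> 0 \<Longrightarrow> F x = f x"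
  unfolding F_def by simp

definition A :: "real \<Rightarrow> real" where "A r = integral {0..r} a"

lemma A_deriv: "r \<in> {0..T} \<Longrightarrow> (A has_real_derivative a r) (at r within {0..T})"
  unfolding A_def[abs_def] by (rule ftc_int[OF a_cont])

lemma A_cont: "continuous_on {0..T} A"
  unfolding A_def[abs_def] by (rule indefinite_integral_continuous_1) (rule integrable_continuous_interval[OF a_cont])

lemma A_nn: "r \<in> {0..T} \<Longrightarrow> A r \<ge> 0"
  unfolding A_def by (rule integral_nonneg) (auto intro: int_sub[OF a_cont] a_nn)

lemma A_mono: "0 \<le> x \<Longrightarrow> x \<le> y \<Longrightarrow> y \<le> T \<Longrightarrow> A x \<le> A y"
proof -
  assume h: "0 \<le> x" "x \<le> y" "y \<le> T"
  have i: "a integrable_on {0..y}" using int_sub[OF a_cont] h by auto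
  have "A y = A x + integral {x..y} a" unfolding A_def using Henstock_Kurzweil_Integration.integral_combine[OF h(1,2) i] by simp
  moreover have "integral {x..y} a \<ge> 0"
    by (rule integral_nonneg) (use int_sub[OF a_cont] h a_nn in auto)
  ultimately show ?thesis by simp
qed

lemma A0: "A 0 = 0" unfolding A_def by simp

lemma A_deriv_sub: "{x..y} \<subseteq> {0..T} \<Longrightarrow> r \<in> {x..y} \<Longrightarrow> (A has_real_derivative a r) (at r within {x..y})"
  by (rule DERIV_subset[OF A_deriv]) auto

definition I1 :: real where "I1 = integral {0..T} A"
definition Dp :: real where "Dp = integral {\<eta>..T} A + \<alpha> * integral {0..\<eta>} (\<lambda>x. x * A x)"

lemma I1_eq: "integral {0..T} (\<lambda>s. (T - s) * a s) = I1"
proof -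
  have "integral {0..T} (\<lambda>s. (T - s) * a s) = ((T - T) * A T + integral {0..T} A) - ((T - 0) * A 0 + integral {0..0} A)"
  proof (rule ftc_eq)
    fix t assume t: "t \<in> {0..T}"
    show "((\<lambda>r. (T - r) * A r + integral {0..r} A) has_real_derivative (T - t) * a t) (at t within {0..T})"
      using A_deriv[OF t] ftc_int[OF A_cont t]
      by (auto intro!: derivative_eq_intros simp: algebra_simps)
  qed (use T_pos in auto)
  then show ?thesis by (simp add: A0 I1_def)
qed

lemma J2: "integral {\<eta>..T} (\<lambda>s. (T - s) * a s) = integral {\<eta>..T} A - (T - \<eta>) * A \<eta>"
proof -
  have Ac: "continuous_on {\<eta>..T} A" by (rule cont_sub[OF A_cont]) (use eta_pos in auto)
  have "integral {\<eta>..T} (\<lambda>s. (T - s) * a s) = ((T - T) * A T + integral {\<eta>..T} A) - ((T - \<eta>) * A \<eta> + integral {\<eta>..\<eta>} A)"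
  proof (rule ftc_eq)
    fix t assume t: "t \<in> {\<eta>..T}"
    show "((\<lambda>r. (T - r) * A r + integral {\<eta>..r} A) has_real_derivative (T - t) * a t) (at t within {\<eta>..T})"
      using A_deriv_sub[OF _ t] ftc_int[OF Ac t] eta_pos
      by (auto intro!: derivative_eq_intros simp: algebra_simps)
  qed (use eta_lt in auto)
  then show ?thesis by simp
qed

lemma J3: "integral {0..\<eta>} (\<lambda>s. (2*(T-\<eta>) + \<alpha>*(\<eta>^2 - s^2)) * a s) = 2*(T-\<eta>) * A \<eta> + 2 * \<alpha> * integral {0..\<eta>} (\<lambda>x. x * A x)"
proof -
  have Ac: "continuous_on {0..\<eta>} (\<lambda>x. x * A x)" by (intro continuous_intros cont_sub[OF A_cont]) (use eta_lt in auto)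
  have "integral {0..\<eta>} (\<lambda>s. (2*(T-\<eta>) + \<alpha>*(\<eta>^2 - s^2)) * a s) =
     ((2*(T-\<eta>) + \<alpha>*(\<eta>^2 - \<eta>^2)) * A \<eta> + 2 * \<alpha> * integral {0..\<eta>} (\<lambda>x. x * A x)) - ((2*(T-\<eta>) + \<alpha>*(\<eta>^2 - 0^2)) * A 0 + 2 * \<alpha> * integral {0..0} (\<lambda>x. x * A x))"
  proof (rule ftc_eq)
    fix t assume t: "t \<in> {0..\<eta>}"
    show "((\<lambda>r. (2*(T-\<eta>) + \<alpha>*(\<eta>^2 - r^2)) * A r + 2 * \<alpha> * integral {0..r} (\<lambda>x. x * A x)) has_real_derivative (2*(T-\<eta>) + \<alpha>*(\<eta>^2 - t^2)) * a t) (at t within {0..\<eta>})"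
      using A_deriv_sub[OF _ t] ftc_int[OF Ac t] eta_lt
      by (auto intro!: derivative_eq_intros simp: algebra_simps power2_eq_square)
  qed (use eta_pos in auto)
  then show ?thesis by (simp add: A0)
qed

lemma D_eq: "integral {\<eta>..T} (\<lambda>s. (T - s) * a s) + 1/2 * integral {0..\<eta>} (\<lambda>s. (2*(T-\<eta>) + \<alpha>*(\<eta>^2 - s^2)) * a s) = Dp"
  unfolding J2 J3 Dp_def by (simp add: algebra_simps)

end

locale rep = bvp +
  fixes G :: "real \<Rightarrow> real" and c :: real and u :: "real \<Rightarrow> real"
  assumes G_cont: "continuous_on {0..T} G" and G_nn: "\<And>s. s \<in> {0..T} \<Longrightarrow> G s \<ge> 0"
    and u_eq: "\<And>t. t \<in> {0..T} \<Longrightarrow> u t = c - integral {0..t} (\<lambda>r. integral {0..r} (\<lambda>s. a s * G s))"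
begin

definition Q :: "real \<Rightarrow> real" where "Q r = integral {0..r} (\<lambda>s. a s * G s)"

lemma aG_cont: "continuous_on {0..T} (\<lambda>s. a s * G s)"
  by (intro continuous_intros a_cont G_cont)

lemma aG_nn: "s \<in> {0..T} \<Longrightarrow> a s * G s \<ge> 0"
  using a_nn G_nn by simp

lemma Q_deriv: "r \<in> {0..T} \<Longrightarrow> (Q has_real_derivative a r * G r) (at r within {0..T})"
  unfolding Q_def[abs_def] by (rule ftc_int[OF aG_cont])

lemma Q_cont: "continuous_on {0..T} Q"
  unfolding Q_def[abs_def] by (rule indefinite_integral_continuous_1) (rule integrable_continuous_interval[OF aG_cont])

lemma Q_split: "0 \<le> x \<Longrightarrow> x \<le> y \<Longrightarrow> y \<le> T \<Longrightarrow> Q y = Q x + integral {x..y} (\<lambda>s. a s * G s)"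
proof -
  assume h: "0 \<le> x" "x \<le> y" "y \<le> T"
  have i: "(\<lambda>s. a s * G s) integrable_on {0..y}" using int_sub[OF aG_cont] h by auto
  show ?thesis unfolding Q_def using Henstock_Kurzweil_Integration.integral_combine[OF h(1,2) i] by simp
qed

lemma Q_mono: "0 \<le> x \<Longrightarrow> x \<le> y \<Longrightarrow> y \<le> T \<Longrightarrow> Q x \<le> Q y"
proof -
  assume h: "0 \<le> x" "x \<le> y" "y \<le> T"
  have "integral {x..y} (\<lambda>s. a s * G s) \<ge> 0"
    by (rule integral_nonneg) (use int_sub[OF aG_cont] h aG_nn in auto)
  then show ?thesis using Q_split[OF h] by simp
qed

lemma Q0: "Q 0 = 0" unfolding Q_def by simp

lemma Q_nn: "r \<in> {0..T} \<Longrightarrow> Q r \<ge> 0"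
  using Q_mono[of 0 r] Q0 by auto

lemma Q_lower: assumes "\<And>s. s \<in> {0..T} \<Longrightarrow> m \<le> G s" "r \<in> {0..T}" shows "m * A r \<le> Q r"
proof -
  have "m * A r = integral {0..r} (\<lambda>s. m * a s)" unfolding A_def by simp
  also have "\<dots> \<le> Q r" unfolding Q_def
  proof (rule integral_le)
    show "(\<lambda>s. m * a s) integrable_on {0..r}" using assms(2) by (intro int_sub[where T=T] continuous_intros a_cont) auto
    show "(\<lambda>s. a s * G s) integrable_on {0..r}" using assms(2) by (intro int_sub[OF aG_cont]) auto
    fix s assume "s \<in> {0..r}"
    then have "s \<in> {0..T}" using assms(2) by auto
    then show "m * a s \<le> a s * G s" using assms(1)[of s] a_nn[of s] by (metis mult.commute mult_right_mono)
  qed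
  finally show ?thesis .
qed

lemma Q_upper: assumes "\<And>s. s \<in> {0..T} \<Longrightarrow> G s \<le> M" "r \<in> {0..T}" shows "Q r \<le> M * A r"
proof -
  have "M * A r = integral {0..r} (\<lambda>s. M * a s)" unfolding A_def by simp
  moreover have "Q r \<le> integral {0..r} (\<lambda>s. M * a s)" unfolding Q_def
  proof (rule integral_le)
    show "(\<lambda>s. M * a s) integrable_on {0..r}" using assms(2) by (intro int_sub[where T=T] continuous_intros a_cont) auto
    show "(\<lambda>s. a s * G s) integrable_on {0..r}" using assms(2) by (intro int_sub[OF aG_cont]) auto
    fix s assume "s \<in> {0..r}"
    then have "s \<in> {0..T}" using assms(2) by auto
    then show "a s * G s \<le> M * a s" using assms(1)[of s] a_nn[of s] by (metis mult.commute mult_right_mono)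
  qed
  ultimately show ?thesis by (simp add: A_def)
qed

lemma u_eqQ: "t \<in> {0..T} \<Longrightarrow> u t = c - integral {0..t} Q"
  using u_eq by (simp add: Q_def[abs_def])

lemma u_deriv: "t \<in> {0..T} \<Longrightarrow> (u has_real_derivative - Q t) (at t within {0..T})"
proof -
  assume t: "t \<in> {0..T}"
  have "((\<lambda>x. c - integral {0..x} Q) has_real_derivative 0 - Q t) (at t within {0..T})"
    by (rule DERIV_diff[OF DERIV_const ftc_int[OF Q_cont t]])
  then have "((\<lambda>x. c - integral {0..x} Q) has_real_derivative - Q t) (at t within {0..T})" by simp
  then show ?thesis
    by (rule has_field_derivative_transform_within[where d=1]) (use t u_eqQ in auto)
qed

lemma u_cont: "continuous_on {0..T} u"
proof -
  have "continuous_on {0..T} (\<lambda>x. c - integral {0..x} Q)"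
    by (intro continuous_intros indefinite_integral_continuous_1 integrable_continuous_interval Q_cont)
  then show ?thesis by (rule continuous_on_eq) (use u_eqQ in auto)
qed

lemma u0: "u 0 = c" using u_eq[of 0] T_pos by simp

lemma u_split: "0 \<le> x \<Longrightarrow> x \<le> y \<Longrightarrow> y \<le> T \<Longrightarrow> u x = u y + integral {x..y} Q"
proof -
  assume h: "0 \<le> x" "x \<le> y" "y \<le> T"
  have i: "Q integrable_on {0..y}" using int_sub[OF Q_cont] h by auto
  show ?thesis using Henstock_Kurzweil_Integration.integral_combine[OF h(1,2) i] u_eqQ[of x] u_eqQ[of y] h by simp
qed

lemma u_antimono: "0 \<le> x \<Longrightarrow> x \<le> y \<Longrightarrow> y \<le> T \<Longrightarrow> u y \<le> u x"
proof -
  assume h: "0 \<le> x" "x \<le> y" "y \<le> T"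
  have "integral {x..y} Q \<ge> 0"
    by (rule integral_nonneg) (use int_sub[OF Q_cont] h Q_nn in auto)
  then show ?thesis using u_split[OF h] by simp
qed

lemma u_le_c: "t \<in> {0..T} \<Longrightarrow> u t \<le> c"
  using u_antimono[of 0 t] u0 by auto

lemma intQ_ge: assumes "\<And>s. s \<in> {0..T} \<Longrightarrow> m \<le> G s" "0 \<le> x" "x \<le> y" "y \<le> T"
  shows "m * integral {x..y} A \<le> integral {x..y} Q"
proof -
  have "m * integral {x..y} A = integral {x..y} (\<lambda>r. m * A r)" by simp
  also have "\<dots> \<le> integral {x..y} Q"
    by (rule integral_le) (use assms Q_lower[OF assms(1)] int_sub[OF A_cont[THEN continuous_on_mult_left, of m]] int_sub[OF Q_cont] in auto)
  finally show ?thesis .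
qed

lemma intQ_le: assumes "\<And>s. s \<in> {0..T} \<Longrightarrow> G s \<le> M" "0 \<le> x" "x \<le> y" "y \<le> T"
  shows "integral {x..y} Q \<le> M * integral {x..y} A"
proof -
  have "integral {x..y} Q \<le> integral {x..y} (\<lambda>r. M * A r)"
    by (rule integral_le) (use assms Q_upper[OF assms(1)] int_sub[OF A_cont[THEN continuous_on_mult_left, of M]] int_sub[OF Q_cont] in auto)
  then show ?thesis by simp
qed

lemma u_deriv_sub: "{x..y} \<subseteq> {0..T} \<Longrightarrow> t \<in> {x..y} \<Longrightarrow> (u has_real_derivative - Q t) (at t within {x..y})"
  by (rule DERIV_subset[OF u_deriv]) auto

lemma J6: "integral {0..\<eta>} u = \<eta> * u \<eta> + integral {0..\<eta>} (\<lambda>t. t * Q t)"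
proof -
  have "integral {0..\<eta>} (\<lambda>t. u t - t * Q t) = \<eta> * u \<eta> - 0 * u 0"
  proof (rule ftc_eq)
    fix t assume t: "t \<in> {0..\<eta>}"
    show "((\<lambda>t. t * u t) has_real_derivative u t - t * Q t) (at t within {0..\<eta>})"
      using u_deriv_sub[OF _ t] eta_lt by (auto intro!: derivative_eq_intros simp: algebra_simps)
  qed (use eta_pos in auto)
  moreover have "integral {0..\<eta>} (\<lambda>t. u t - t * Q t) = integral {0..\<eta>} u - integral {0..\<eta>} (\<lambda>t. t * Q t)"
  proof (rule integral_diff)
    show "u integrable_on {0..\<eta>}" using int_sub[OF u_cont] eta_lt by auto
    show "(\<lambda>t. t * Q t) integrable_on {0..\<eta>}"
      by (rule int_sub[where T=T]) (use eta_lt in \<open>auto intro!: continuous_intros Q_cont\<close>)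
  qed
  ultimately show ?thesis by simp
qed

lemma uT: "u T = c - integral {0..T} Q" using u_eqQ[of T] T_pos by simp

lemma u_ge_int: "\<eta> * u T \<le> integral {0..\<eta>} u"
  using int_bound_ge[of 0 \<eta> u "u T"] eta_pos eta_lt cont_sub[OF u_cont, of 0 \<eta>] u_antimono by (auto simp: mult.commute)

lemma u_le_int: "integral {0..\<eta>} u \<le> \<eta> * c"
  using int_bound_le[of 0 \<eta> u c] eta_pos eta_lt cont_sub[OF u_cont, of 0 \<eta>] u_le_c by (auto simp: mult.commute)

lemma u_ge_int2: "\<eta> * u \<eta> \<le> integral {0..\<eta>} u"
  using int_bound_ge[of 0 \<eta> u "u \<eta>"] eta_pos eta_lt cont_sub[OF u_cont, of 0 \<eta>] u_antimono by (auto simp: mult.commute)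

lemma concave: "(T - \<eta>) * c + \<eta> * u T \<le> T * u \<eta>"
proof -
  have h1: "c - u \<eta> \<le> Q \<eta> * \<eta>"
    using u_split[of 0 \<eta>] u0 int_bound_le[of 0 \<eta> Q "Q \<eta>"] eta_pos eta_lt cont_sub[OF Q_cont, of 0 \<eta>] Q_mono by auto
  have h2: "Q \<eta> * (T - \<eta>) \<le> u \<eta> - u T"
    using u_split[of \<eta> T] int_bound_ge[of \<eta> T Q "Q \<eta>"] eta_pos eta_lt cont_sub[OF Q_cont, of \<eta> T] Q_mono by auto
  have "(c - u \<eta>) * (T - \<eta>) \<le> (Q \<eta> * \<eta>) * (T - \<eta>)" by (rule mult_right_mono[OF h1]) (use eta_lt in auto)
  also have "\<dots> = \<eta> * (Q \<eta> * (T - \<eta>))" by simp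
  also have "\<dots> \<le> \<eta> * (u \<eta> - u T)" by (rule mult_left_mono[OF h2]) (use eta_pos in auto)
  finally show ?thesis by (simp add: algebra_simps)
qed

lemma small_nonneg: assumes "\<alpha> * integral {0..\<eta>} u \<le> u T" shows "0 \<le> u T"
proof -
  have "\<alpha> * (\<eta> * u T) \<le> \<alpha> * integral {0..\<eta>} u" using u_ge_int alpha_pos by simp
  then have "(1 - \<alpha> * \<eta>) * u T \<ge> 0" using assms by (simp add: algebra_simps)
  then show ?thesis using alpha_eta by (simp add: zero_le_mult_iff)
qed

lemma small_gamma: assumes "\<alpha> * integral {0..\<eta>} u \<le> u T" shows "gamma_c T \<eta> \<alpha> * c \<le> u T"
proof -
  have pos: "T - \<alpha> * \<eta>^2 > 0"
  proof -
    have "\<alpha> * \<eta>^2 = (\<alpha> * \<eta>) * \<eta>" by (simp add: power2_eq_square)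
    also have "\<dots> < 1 * \<eta>" by (rule mult_strict_right_mono) (use alpha_eta eta_pos in auto)
    finally show ?thesis using eta_lt by simp
  qed
  have "\<alpha> * \<eta> * (T * u \<eta>) \<le> T * (\<alpha> * (\<eta> * u \<eta>))" by simp
  also have "\<dots> \<le> T * (\<alpha> * integral {0..\<eta>} u)" using u_ge_int2 alpha_pos T_pos by simp
  also have "\<dots> \<le> T * u T" using assms T_pos by simp
  finally have "\<alpha> * \<eta> * (T * u \<eta>) \<le> T * u T" .
  moreover have "\<alpha> * \<eta> * ((T - \<eta>) * c + \<eta> * u T) \<le> \<alpha> * \<eta> * (T * u \<eta>)"
    by (rule mult_left_mono[OF concave]) (use alpha_pos eta_pos in auto)
  ultimately have "\<alpha> * \<eta> * (T - \<eta>) * c \<le> (T - \<alpha> * \<eta>^2) * u T"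
    by (simp add: algebra_simps power2_eq_square)
  then show ?thesis unfolding gamma_c_def using pos by (simp add: pos_divide_le_eq mult.commute)
qed

lemma small_D: assumes phi: "\<alpha> * integral {0..\<eta>} u \<le> u T"
  and m: "\<And>s. s \<in> {0..T} \<Longrightarrow> m \<le> G s" "0 \<le> m"
  shows "m * Dp \<le> (1 - \<alpha> * \<eta>) * c"
proof -
  have e1: "m * integral {0..T} A \<le> c - u T" using intQ_ge[OF m(1), of 0 T] T_pos uT by simp
  have qa: "m * integral {0..\<eta>} (\<lambda>t. t * A t) \<le> integral {0..\<eta>} (\<lambda>t. t * Q t)"
  proof -
    have "m * integral {0..\<eta>} (\<lambda>t. t * A t) = integral {0..\<eta>} (\<lambda>t. m * (t * A t))" by simp
    also have "\<dots> \<le> integral {0..\<eta>} (\<lambda>t. t * Q t)"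
    proof (rule integral_le)
      show "(\<lambda>t. m * (t * A t)) integrable_on {0..\<eta>}"
        by (rule int_sub[where T=T]) (use eta_lt in \<open>auto intro!: continuous_intros A_cont\<close>)
      show "(\<lambda>t. t * Q t) integrable_on {0..\<eta>}"
        by (rule int_sub[where T=T]) (use eta_lt in \<open>auto intro!: continuous_intros Q_cont\<close>)
      fix t assume t: "t \<in> {0..\<eta>}"
      then have "m * A t \<le> Q t" using Q_lower[OF m(1)] eta_lt by auto
      then show "m * (t * A t) \<le> t * Q t" using t by (metis mult.left_commute atLeastAtMost_iff mult_left_mono)
    qed
    finally show ?thesis .
  qed
  have e2: "m * (\<eta> * integral {\<eta>..T} A + integral {0..\<eta>} (\<lambda>t. t * A t)) \<le> integral {0..\<eta>} u - \<eta> * u T"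
  proof -
    have "m * integral {\<eta>..T} A \<le> integral {\<eta>..T} Q" using intQ_ge[OF m(1), of \<eta> T] eta_pos eta_lt by simp
    then have "\<eta> * (m * integral {\<eta>..T} A) \<le> \<eta> * (u \<eta> - u T)" using u_split[of \<eta> T] eta_pos eta_lt by simp
    then show ?thesis using qa J6 by (simp add: algebra_simps)
  qed
  have e3: "\<alpha> * (integral {0..\<eta>} u - \<eta> * u T) \<le> (1 - \<alpha> * \<eta>) * u T" using phi by (simp add: algebra_simps)
  have Asplit: "integral {0..T} A = integral {0..\<eta>} A + integral {\<eta>..T} A"
    using Henstock_Kurzweil_Integration.integral_combine[of 0 \<eta> T A] int_sub[OF A_cont, of 0 T] eta_pos eta_lt by auto
  have A_nn_int: "integral {0..\<eta>} A \<ge> 0" by (rule integral_nonneg) (use int_sub[OF A_cont] A_nn eta_lt in auto)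
  have "m * Dp = m * ((1 - \<alpha> * \<eta>) * integral {\<eta>..T} A) + \<alpha> * (m * (\<eta> * integral {\<eta>..T} A + integral {0..\<eta>} (\<lambda>t. t * A t)))"
    unfolding Dp_def by (simp add: algebra_simps)
  also have "\<dots> \<le> m * ((1 - \<alpha> * \<eta>) * integral {0..T} A) + \<alpha> * (integral {0..\<eta>} u - \<eta> * u T)"
  proof (rule add_mono)
    show "m * ((1 - \<alpha> * \<eta>) * integral {\<eta>..T} A) \<le> m * ((1 - \<alpha> * \<eta>) * integral {0..T} A)"
      using Asplit A_nn_int m(2) alpha_eta by (intro mult_left_mono) auto
    show "\<alpha> * (m * (\<eta> * integral {\<eta>..T} A + integral {0..\<eta>} (\<lambda>t. t * A t))) \<le> \<alpha> * (integral {0..\<eta>} u - \<eta> * u T)"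
      using e2 alpha_pos by simp
  qed
  also have "\<dots> \<le> (1 - \<alpha> * \<eta>) * (c - u T) + (1 - \<alpha> * \<eta>) * u T"
  proof (rule add_mono[OF _ e3])
    have "m * ((1 - \<alpha> * \<eta>) * integral {0..T} A) = (1 - \<alpha> * \<eta>) * (m * integral {0..T} A)" by simp
    also have "\<dots> \<le> (1 - \<alpha> * \<eta>) * (c - u T)" using e1 alpha_eta by (intro mult_left_mono) auto
    finally show "m * ((1 - \<alpha> * \<eta>) * integral {0..T} A) \<le> (1 - \<alpha> * \<eta>) * (c - u T)" .
  qed
  also have "\<dots> = (1 - \<alpha> * \<eta>) * c" by (simp add: algebra_simps)
  finally show ?thesis .
qed

lemma large_est: assumes "\<And>s. s \<in> {0..T} \<Longrightarrow> G s \<le> M"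
  shows "c * (1 - \<alpha> * \<eta>) - M * I1 \<le> u T - \<alpha> * integral {0..\<eta>} u"
proof -
  have "integral {0..T} Q \<le> M * I1" using intQ_le[OF assms, of 0 T] T_pos I1_def by simp
  then have "c - M * I1 \<le> u T" using uT by simp
  moreover have "\<alpha> * integral {0..\<eta>} u \<le> \<alpha> * (\<eta> * c)" using u_le_int alpha_pos by simp
  ultimately show ?thesis by (simp add: algebra_simps)
qed

end

context bvp
begin

lemma a_bnd: obtains B where "B \<ge> 0" "\<And>t. t \<in> {0..T} \<Longrightarrow> \<bar>a t\<bar> \<le> B"
proof -
  have "bounded (a ` {0..T})" by (rule compact_imp_bounded, rule compact_continuous_image[OF a_cont]) auto
  then obtain B where "\<forall>x\<in>a ` {0..T}. norm x \<le> B" unfolding bounded_iff by blast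
  then show ?thesis using that[of "max B 0"] by force
qed

lemma cont_bnd: fixes v :: "real \<Rightarrow> real" assumes "continuous_on {0..T} v" obtains K where "K \<ge> 0" "\<And>t. t \<in> {0..T} \<Longrightarrow> \<bar>v t\<bar> \<le> K"
proof -
  have "bounded (v ` {0..T})" by (rule compact_imp_bounded, rule compact_continuous_image[OF assms]) auto
  then obtain B where "\<forall>x\<in>v ` {0..T}. norm x \<le> B" unfolding bounded_iff by blast
  then show ?thesis using that[of "max B 0"] by force
qed

definition Phi :: "real \<Rightarrow> real \<Rightarrow> (real \<Rightarrow> real) \<Rightarrow> real \<Rightarrow> real" where
  "Phi h c v t = c - integral {0..t} (\<lambda>r. integral {0..r} (\<lambda>s. a s * F (v (max (s - h) 0))))"

definition it :: "real \<Rightarrow> real \<Rightarrow> nat \<Rightarrow> real \<Rightarrow> real" where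
  "it h c k = (Phi h c ^^ k) (\<lambda>t. c)"

definition NN :: "real \<Rightarrow> nat" where "NN h = nat \<lceil>T / h\<rceil>"

definition U :: "real \<Rightarrow> real \<Rightarrow> real \<Rightarrow> real" where "U h c = it h c (NN h)"

lemma delay_cont: assumes "h > 0" "continuous_on {0..T} v"
  shows "continuous_on {0..T} (\<lambda>s. F (v (max (s - h) 0)))"
  apply (rule F_comp)
  apply (rule continuous_on_compose2[OF assms(2)])
  using assms(1) T_pos by (auto intro!: continuous_intros)

lemma delay_in: "h > 0 \<Longrightarrow> s \<in> {0..T} \<Longrightarrow> max (s - h) 0 \<in> {0..T}"
  by auto

lemma Phi_rep: assumes "h > 0" "continuous_on {0..T} v"
  shows "rep T \<eta> \<alpha> a f (\<lambda>s. F (v (max (s - h) 0))) c (Phi h c v)"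
  using bvp_axioms delay_cont[OF assms] F_nn unfolding rep_def rep_axioms_def Phi_def by auto

lemma Phi_cont: assumes "h > 0" "continuous_on {0..T} v" shows "continuous_on {0..T} (Phi h c v)"
  using rep.u_cont[OF Phi_rep[OF assms]] .

lemma it_Suc: "it h c (Suc k) = Phi h c (it h c k)"
  unfolding it_def by simp

lemma it_cont: assumes "h > 0" shows "continuous_on {0..T} (it h c k)"
proof (induction k)
  case 0 then show ?case by (simp add: it_def)
next
  case (Suc k) then show ?case unfolding it_Suc by (rule Phi_cont[OF assms])
qed

lemma it_agree: assumes "h > 0"
  shows "0 \<le> t \<Longrightarrow> t \<le> real k * h \<Longrightarrow> t \<le> T \<Longrightarrow> it h c (Suc k) t = it h c k t"
proof (induction k arbitrary: t)
  case 0
  then have "t = 0" by simp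
  then show ?case by (simp add: it_def Phi_def)
next
  case (Suc k)
  have eq: "it h c (Suc k) (max (s - h) 0) = it h c k (max (s - h) 0)" if "0 \<le> s" "s \<le> t" for s
  proof (rule Suc.IH)
    show "max (s - h) 0 \<le> real k * h" using Suc.prems that assms by (auto simp: algebra_simps)
    show "max (s - h) 0 \<le> T" using Suc.prems that assms by auto
  qed auto
  have "it h c (Suc (Suc k)) t = Phi h c (it h c (Suc k)) t" by (simp add: it_Suc)
  also have "\<dots> = Phi h c (it h c k) t"
    unfolding Phi_def
    apply (rule arg_cong[where f="\<lambda>x. c - x"])
    apply (rule integral_cong)
    apply (rule integral_cong)
    using eq by auto
  also have "\<dots> = it h c (Suc k) t" by (simp add: it_Suc)
  finally show ?case .
qed

lemma U_fix: assumes "h > 0" "t \<in> {0..T}" shows "U h c t = Phi h c (U h c) t"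
proof -
  have "T \<le> real (NN h) * h" unfolding NN_def using assms(1)
  proof -
    have "T / h \<le> real (nat \<lceil>T / h\<rceil>)" by (rule real_nat_ceiling_ge)
    then show "T \<le> real (nat \<lceil>T / h\<rceil>) * h" using assms(1) by (simp add: divide_le_eq)
  qed
  then have "it h c (Suc (NN h)) t = it h c (NN h) t" using it_agree[OF assms(1)] assms(2) by auto
  then show ?thesis unfolding U_def it_Suc by simp
qed

lemma U_rep: assumes "h > 0" shows "rep T \<eta> \<alpha> a f (\<lambda>s. F (U h c (max (s - h) 0))) c (U h c)"
proof -
  have "continuous_on {0..T} (U h c)" unfolding U_def by (rule it_cont[OF assms])
  note r = Phi_rep[OF assms this, of c]
  show ?thesis
    using r U_fix[OF assms] unfolding rep_def rep_axioms_def Phi_def by auto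
qed


lemma Phi_diff:
  fixes v w :: "real \<Rightarrow> real"
  assumes h: "h > 0" and cv: "continuous_on {0..T} v" and cw: "continuous_on {0..T} w"
    and e: "\<And>x. x \<in> {0..T} \<Longrightarrow> \<bar>F (v x) - F (w x)\<bar> \<le> e"
    and B: "B \<ge> 0" "\<And>t. t \<in> {0..T} \<Longrightarrow> \<bar>a t\<bar> \<le> B"
    and t: "t \<in> {0..T}"
  shows "\<bar>Phi h c v t - Phi h c' w t\<bar> \<le> \<bar>c - c'\<bar> + T * (T * (B * e))"
proof -
  interpret rv: rep T \<eta> \<alpha> a f "\<lambda>s. F (v (max (s-h) 0))" c "Phi h c v" by (rule Phi_rep[OF h cv])
  interpret rw: rep T \<eta> \<alpha> a f "\<lambda>s. F (w (max (s-h) 0))" c' "Phi h c' w" by (rule Phi_rep[OF h cw])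
  have e0: "e \<ge> 0" using e[of 0] T_pos by auto
  have Qd: "\<bar>rv.Q r - rw.Q r\<bar> \<le> B * e * T" if r: "r \<in> {0..T}" for r
  proof -
    have "rv.Q r - rw.Q r = integral {0..r} (\<lambda>s. a s * F (v (max (s-h) 0)) - a s * F (w (max (s-h) 0)))"
      unfolding rv.Q_def rw.Q_def
      by (rule integral_diff[symmetric]) (use r int_sub[OF rv.aG_cont] int_sub[OF rw.aG_cont] in auto)
    also have "\<bar>\<dots>\<bar> \<le> B * e * (r - 0)"
    proof (rule int_abs_bound)
      show "continuous_on {0..r} (\<lambda>s. a s * F (v (max (s-h) 0)) - a s * F (w (max (s-h) 0)))"
        by (rule cont_sub[where T=T]) (use r in \<open>auto intro!: continuous_intros rv.aG_cont rw.aG_cont\<close>)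
      fix s assume s: "s \<in> {0..r}"
      then have s': "s \<in> {0..T}" "max (s-h) 0 \<in> {0..T}" using r h by auto
      have "\<bar>a s * F (v (max (s-h) 0)) - a s * F (w (max (s-h) 0))\<bar> = \<bar>a s\<bar> * \<bar>F (v (max (s-h) 0)) - F (w (max (s-h) 0))\<bar>"
        by (simp add: abs_mult[symmetric] right_diff_distrib)
      also have "\<dots> \<le> B * e" by (rule mult_mono) (use B s' e in auto)
      finally show "\<bar>a s * F (v (max (s-h) 0)) - a s * F (w (max (s-h) 0))\<bar> \<le> B * e" .
    qed (use r in auto)
    also have "\<dots> \<le> B * e * T" using r B e0 by (intro mult_left_mono) auto
    finally show ?thesis .
  qed
  have "Phi h c v t - Phi h c' w t = (c - c') - integral {0..t} (\<lambda>r. rv.Q r - rw.Q r)"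
  proof -
    have "integral {0..t} (\<lambda>r. rv.Q r - rw.Q r) = integral {0..t} rv.Q - integral {0..t} rw.Q"
      by (rule integral_diff) (use t int_sub[OF rv.Q_cont] int_sub[OF rw.Q_cont] in auto)
    then show ?thesis using rv.u_eqQ[OF t] rw.u_eqQ[OF t] by simp
  qed
  moreover have "\<bar>integral {0..t} (\<lambda>r. rv.Q r - rw.Q r)\<bar> \<le> B * e * T * (t - 0)"
    by (rule int_abs_bound) (use t Qd in \<open>auto intro!: continuous_intros cont_sub[OF rv.Q_cont] cont_sub[OF rw.Q_cont]\<close>)
  moreover have "B * e * T * (t - 0) \<le> T * (T * (B * e))"
  proof -
    have "B * e * T * t \<le> B * e * T * T" by (rule mult_left_mono) (use t B e0 T_pos in auto)
    then show ?thesis by (simp add: algebra_simps)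
  qed
  ultimately show ?thesis by linarith
qed

lemma it_ucont: assumes h: "h > 0"
  shows "\<forall>c. \<forall>\<epsilon>>0. \<exists>\<delta>>0. \<forall>c'. \<bar>c' - c\<bar> < \<delta> \<longrightarrow> (\<forall>t\<in>{0..T}. \<bar>it h c' k t - it h c k t\<bar> < \<epsilon>)"
proof (induction k)
  case 0
  then show ?case by (auto simp: it_def)
next
  case (Suc k)
  show ?case
  proof (intro allI impI)
    fix c \<epsilon> :: real assume \<epsilon>: "\<epsilon> > 0"
    obtain B where B: "B \<ge> 0" "\<And>t. t \<in> {0..T} \<Longrightarrow> \<bar>a t\<bar> \<le> B" using a_bnd by blast
    have cv: "continuous_on {0..T} (it h c k)" by (rule it_cont[OF h])
    obtain K where K: "K \<ge> 0" "\<And>t. t \<in> {0..T} \<Longrightarrow> \<bar>it h c k t\<bar> \<le> K" using cont_bnd[OF cv] by blast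
    define \<epsilon>1 where "\<epsilon>1 = (\<epsilon> / 2) / (T * T * B + 1)"
    have TB: "T * T * B \<ge> 0" using B T_pos by simp
    have TB1: "T * T * B + 1 \<noteq> 0" using TB by linarith
    have \<epsilon>1: "\<epsilon>1 > 0" unfolding \<epsilon>1_def using \<epsilon> TB by (simp add: add_nonneg_pos)
    have \<epsilon>1e: "(T * T * B + 1) * \<epsilon>1 = \<epsilon> / 2" unfolding \<epsilon>1_def
      by (metis times_divide_eq_right nonzero_mult_div_cancel_left TB1)
    have "uniformly_continuous_on {-(K+1)..K+1} F"
      by (rule compact_uniformly_continuous) (auto intro: continuous_on_subset[OF F_cont])
    then obtain \<rho> where \<rho>: "\<rho> > 0" "\<And>x y. x \<in> {-(K+1)..K+1} \<Longrightarrow> y \<in> {-(K+1)..K+1} \<Longrightarrow> dist y x < \<rho> \<Longrightarrow> dist (F y) (F x) < \<epsilon>1"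
      unfolding uniformly_continuous_on_def using \<epsilon>1 by metis
    obtain \<delta>0 where \<delta>0: "\<delta>0 > 0" "\<And>c'. \<bar>c' - c\<bar> < \<delta>0 \<Longrightarrow> (\<forall>t\<in>{0..T}. \<bar>it h c' k t - it h c k t\<bar> < min \<rho> 1)"
      using Suc.IH \<rho>(1) by (metis min_less_iff_conj zero_less_one)
    show "\<exists>\<delta>>0. \<forall>c'. \<bar>c' - c\<bar> < \<delta> \<longrightarrow> (\<forall>t\<in>{0..T}. \<bar>it h c' (Suc k) t - it h c (Suc k) t\<bar> < \<epsilon>)"
    proof (intro exI[of _ "min \<delta>0 (\<epsilon>/2)"] conjI allI impI ballI)
      show "min \<delta>0 (\<epsilon>/2) > 0" using \<delta>0 \<epsilon> by simp
      fix c' t assume c': "\<bar>c' - c\<bar> < min \<delta>0 (\<epsilon>/2)" and t: "t \<in> {0..T}"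
      have close: "\<bar>it h c' k x - it h c k x\<bar> < min \<rho> 1" if "x \<in> {0..T}" for x using \<delta>0(2) c' that by auto
      have Fe: "\<bar>F (it h c' k x) - F (it h c k x)\<bar> \<le> \<epsilon>1" if x: "x \<in> {0..T}" for x
      proof -
        have "it h c k x \<in> {-(K+1)..K+1}" using K(2)[OF x] by auto
        moreover have "it h c' k x \<in> {-(K+1)..K+1}" using K(2)[OF x] close[OF x] by auto
        ultimately show ?thesis using \<rho>(2)[of "it h c k x" "it h c' k x"] close[OF x] by (auto simp: dist_real_def)
      qed
      have "\<bar>Phi h c' (it h c' k) t - Phi h c (it h c k) t\<bar> \<le> \<bar>c' - c\<bar> + T * (T * (B * \<epsilon>1))"
        by (rule Phi_diff[OF h it_cont[OF h] it_cont[OF h] Fe B t])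
      also have "T * (T * (B * \<epsilon>1)) \<le> \<epsilon> / 2"
      proof -
        have "T * (T * (B * \<epsilon>1)) \<le> (T * T * B + 1) * \<epsilon>1" using \<epsilon>1 by (simp add: algebra_simps)
        then show ?thesis using \<epsilon>1e by simp
      qed
      finally show "\<bar>it h c' (Suc k) t - it h c (Suc k) t\<bar> < \<epsilon>" unfolding it_Suc using c' by linarith
    qed
  qed
qed

definition phi :: "real \<Rightarrow> real \<Rightarrow> real" where
  "phi h c = U h c T - \<alpha> * integral {0..\<eta>} (U h c)"

lemma phi_cont: assumes h: "h > 0" shows "continuous_on S (phi h)"
  unfolding continuous_on_iff
proof (intro ballI allI impI)
  fix c e :: real assume e: "e > 0"
  define \<epsilon> where "\<epsilon> = (e / 2) / (1 + \<alpha> * \<eta>)"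
  have ae: "\<alpha> * \<eta> > 0" using alpha_pos eta_pos by simp
  have ae1: "1 + \<alpha> * \<eta> \<noteq> 0" using ae by linarith
  have \<epsilon>: "\<epsilon> > 0" unfolding \<epsilon>_def using e ae by simp
  have \<epsilon>e: "\<epsilon> * (1 + \<alpha> * \<eta>) = e / 2" unfolding \<epsilon>_def
    by (metis times_divide_eq_right nonzero_mult_div_cancel_left ae1 mult.commute)
  obtain \<delta> where \<delta>: "\<delta> > 0" "\<And>c'. \<bar>c' - c\<bar> < \<delta> \<Longrightarrow> (\<forall>t\<in>{0..T}. \<bar>U h c' t - U h c t\<bar> < \<epsilon>)"
    using it_ucont[OF h, of "NN h"] \<epsilon> unfolding U_def by metis
  show "\<exists>d>0. \<forall>c'\<in>S. dist c' c < d \<longrightarrow> dist (phi h c') (phi h c) < e"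
  proof (intro exI[of _ \<delta>] conjI ballI impI)
    show "\<delta> > 0" by (rule \<delta>(1))
    fix c' assume "dist c' c < \<delta>"
    then have cl: "\<And>t. t \<in> {0..T} \<Longrightarrow> \<bar>U h c' t - U h c t\<bar> < \<epsilon>" using \<delta>(2) by (auto simp: dist_real_def)
    have c1: "continuous_on {0..T} (U h c')" "continuous_on {0..T} (U h c)" unfolding U_def by (rule it_cont[OF h])+
    have "integral {0..\<eta>} (U h c') - integral {0..\<eta>} (U h c) = integral {0..\<eta>} (\<lambda>t. U h c' t - U h c t)"
      by (rule integral_diff[symmetric]) (use int_sub[OF c1(1)] int_sub[OF c1(2)] eta_lt in auto)
    also have "\<bar>\<dots>\<bar> \<le> \<epsilon> * (\<eta> - 0)"
      by (rule int_abs_bound) (use eta_pos eta_lt cl in \<open>auto intro!: continuous_intros cont_sub[OF c1(1)] cont_sub[OF c1(2)] less_imp_le\<close>)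
    finally have i: "\<bar>integral {0..\<eta>} (U h c') - integral {0..\<eta>} (U h c)\<bar> \<le> \<epsilon> * \<eta>" by simp
    have "\<bar>phi h c' - phi h c\<bar> \<le> \<bar>U h c' T - U h c T\<bar> + \<alpha> * \<bar>integral {0..\<eta>} (U h c') - integral {0..\<eta>} (U h c)\<bar>"
    proof -
      have "phi h c' - phi h c = (U h c' T - U h c T) - \<alpha> * (integral {0..\<eta>} (U h c') - integral {0..\<eta>} (U h c))"
        unfolding phi_def by (simp add: algebra_simps)
      moreover have "\<bar>(U h c' T - U h c T) - \<alpha> * (integral {0..\<eta>} (U h c') - integral {0..\<eta>} (U h c))\<bar> \<le> \<bar>U h c' T - U h c T\<bar> + \<bar>\<alpha> * (integral {0..\<eta>} (U h c') - integral {0..\<eta>} (U h c))\<bar>"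
        by (rule abs_triangle_ineq4)
      ultimately show ?thesis using alpha_pos by (simp add: abs_mult)
    qed
    also have "\<dots> \<le> \<epsilon> + \<alpha> * (\<epsilon> * \<eta>)"
      using cl[of T] T_pos i alpha_pos by (intro add_mono mult_left_mono) auto
    also have "\<dots> = \<epsilon> * (1 + \<alpha> * \<eta>)" by (simp add: algebra_simps)
    also have "\<dots> < e" using \<epsilon>e e by simp
    finally show "dist (phi h c') (phi h c) < e" by (simp add: dist_real_def)
  qed
qed

end

context bvp
begin

lemma gamma_pos: "gamma_c T \<eta> \<alpha> > 0"
proof -
  have "\<alpha> * \<eta>^2 = (\<alpha> * \<eta>) * \<eta>" by (simp add: power2_eq_square)
  also have "\<dots> < 1 * \<eta>" by (rule mult_strict_right_mono) (use alpha_eta eta_pos in auto)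
  finally have "T - \<alpha> * \<eta>^2 > 0" using eta_lt by simp
  then show ?thesis unfolding gamma_c_def using alpha_pos eta_pos eta_lt by simp
qed

end

locale bvp2 = bvp +
  fixes \<alpha>2 \<beta>2 :: real
  assumes lim0: "((\<lambda>x. f x / x) \<longlongrightarrow> \<alpha>2) (at_right 0)"
    and liminf: "((\<lambda>x. f x / x) \<longlongrightarrow> \<beta>2) at_top"
    and beta_nn: "\<beta>2 \<ge> 0"
    and large_cond: "\<beta>2 * I1 < 1 - \<alpha> * \<eta>"
    and small_cond: "\<alpha>2 * gamma_c T \<eta> \<alpha> * Dp > 1 - \<alpha> * \<eta>"
    and Dp_pos: "Dp > 0"
begin

lemma small_shoot: obtains \<delta> where "\<delta> > 0" "\<And>h c. h > 0 \<Longrightarrow> 0 < c \<Longrightarrow> c \<le> \<delta> \<Longrightarrow> phi h c < 0"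
proof -
  define \<gamma> where "\<gamma> = gamma_c T \<eta> \<alpha>"
  have \<gamma>: "\<gamma> > 0" unfolding \<gamma>_def by (rule gamma_pos)
  have gD: "\<gamma> * Dp > 0" using \<gamma> Dp_pos by simp
  define \<epsilon> where "\<epsilon> = (\<alpha>2 * \<gamma> * Dp - (1 - \<alpha> * \<eta>)) / 2 / (\<gamma> * Dp)"
  have \<epsilon>: "\<epsilon> > 0" unfolding \<epsilon>_def using small_cond gD \<gamma>_def by simp
  have key: "(\<alpha>2 - \<epsilon>) * \<gamma> * Dp > 1 - \<alpha> * \<eta>"
  proof -
    have "\<epsilon> * (\<gamma> * Dp) = (\<alpha>2 * \<gamma> * Dp - (1 - \<alpha> * \<eta>)) / 2" unfolding \<epsilon>_def by (rule dmc) (use gD in linarith)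
    then have eq: "(\<alpha>2 - \<epsilon>) * \<gamma> * Dp = \<alpha>2 * \<gamma> * Dp - (\<alpha>2 * \<gamma> * Dp - (1 - \<alpha> * \<eta>)) / 2"
      by (simp add: algebra_simps)
    have "\<alpha>2 * \<gamma> * Dp - (\<alpha>2 * \<gamma> * Dp - (1 - \<alpha> * \<eta>)) / 2 > 1 - \<alpha> * \<eta>"
      using small_cond[folded \<gamma>_def] by (simp add: field_simps)
    then show ?thesis by (subst eq)
  qed
  have am: "\<alpha>2 - \<epsilon> > 0"
  proof (rule ccontr)
    assume "\<not> ?thesis"
    then have "(\<alpha>2 - \<epsilon>) * (\<gamma> * Dp) \<le> 0" using gD by (simp add: mult_nonpos_nonneg)
    then show False using key alpha_eta by (simp add: mult.assoc)
  qed
  have "\<forall>\<^sub>F x in at_right 0. \<alpha>2 - \<epsilon> < f x / x" by (rule order_tendstoD(1)[OF lim0]) (use \<epsilon> in simp)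
  then obtain b where b: "b > 0" "\<And>y. 0 < y \<Longrightarrow> y < b \<Longrightarrow> \<alpha>2 - \<epsilon> < f y / y"
    unfolding eventually_at_right_field by auto
  have fl: "(\<alpha>2 - \<epsilon>) * x \<le> f x" if "0 \<le> x" "x \<le> b / 2" for x
  proof (cases "x = 0")
    case True then show ?thesis using f_nn by simp
  next
    case False
    then have "x > 0" "x < b" using that b by auto
    then show ?thesis using b(2)[of x] by (simp add: pos_less_divide_eq less_imp_le)
  qed
  show ?thesis
  proof (rule that[of "b/2"])
    show "b / 2 > 0" using b by simp
    fix h c :: real assume h: "h > 0" and c: "0 < c" "c \<le> b / 2"
    interpret r: rep T \<eta> \<alpha> a f "\<lambda>s. F (U h c (max (s - h) 0))" c "U h c" by (rule U_rep[OF h])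
    show "phi h c < 0"
    proof (rule ccontr)
      assume "\<not> phi h c < 0"
      then have phi: "\<alpha> * integral {0..\<eta>} (U h c) \<le> U h c T" unfolding phi_def by simp
      have uT0: "0 \<le> U h c T" by (rule r.small_nonneg[OF phi])
      have uTg: "\<gamma> * c \<le> U h c T" unfolding \<gamma>_def by (rule r.small_gamma[OF phi])
      have m: "(\<alpha>2 - \<epsilon>) * (\<gamma> * c) \<le> F (U h c (max (s - h) 0))" if s: "s \<in> {0..T}" for s
      proof -
        define x where "x = U h c (max (s - h) 0)"
        have xi: "max (s - h) 0 \<in> {0..T}" using s h by auto
        have "U h c T \<le> x" unfolding x_def by (rule r.u_antimono) (use xi in auto)
        moreover have "x \<le> c" unfolding x_def by (rule r.u_le_c[OF xi])
        ultimately have x: "0 \<le> x" "x \<le> b/2" "\<gamma> * c \<le> x" using uT0 uTg c by auto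
        have "(\<alpha>2 - \<epsilon>) * (\<gamma> * c) \<le> (\<alpha>2 - \<epsilon>) * x" by (rule mult_left_mono) (use x am in auto)
        also have "\<dots> \<le> f x" by (rule fl) (use x in auto)
        finally show ?thesis unfolding x_def[symmetric] using F_eq x by simp
      qed
      have "(\<alpha>2 - \<epsilon>) * (\<gamma> * c) * Dp \<le> (1 - \<alpha> * \<eta>) * c"
        by (rule r.small_D[OF phi m]) (use am \<gamma> c in auto)
      then have "((\<alpha>2 - \<epsilon>) * \<gamma> * Dp) * c \<le> (1 - \<alpha> * \<eta>) * c" by (simp add: algebra_simps)
      then have "(\<alpha>2 - \<epsilon>) * \<gamma> * Dp \<le> 1 - \<alpha> * \<eta>" using c by simp
      then show False using key by simp
    qed
  qed
qed

lemma large_shoot: obtains R where "R > 0" "\<And>h c. h > 0 \<Longrightarrow> R \<le> c \<Longrightarrow> phi h c > 0"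
proof -
  have I1nn: "I1 \<ge> 0" unfolding I1_def by (rule integral_nonneg) (use int_sub[OF A_cont] A_nn in auto)
  define \<epsilon> where "\<epsilon> = (1 - \<alpha> * \<eta> - \<beta>2 * I1) / 2 / (I1 + 1)"
  have \<epsilon>: "\<epsilon> > 0" unfolding \<epsilon>_def using large_cond I1nn by simp
  have "\<epsilon> * I1 \<le> \<epsilon> * (I1 + 1)" using \<epsilon> by simp
  also have "\<epsilon> * (I1 + 1) = (1 - \<alpha> * \<eta> - \<beta>2 * I1) / 2" unfolding \<epsilon>_def by (rule dmc) (use I1nn in simp)
  finally have eI: "\<epsilon> * I1 \<le> (1 - \<alpha> * \<eta> - \<beta>2 * I1) / 2" .
  define \<kappa> where "\<kappa> = 1 - \<alpha> * \<eta> - (\<beta>2 + \<epsilon>) * I1"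
  have \<kappa>: "\<kappa> > 0" unfolding \<kappa>_def using eI large_cond by (simp add: algebra_simps)
  have "\<forall>\<^sub>F x in at_top. f x / x < \<beta>2 + \<epsilon>" by (rule order_tendstoD(2)[OF liminf]) (use \<epsilon> in simp)
  then obtain X where X: "\<And>x. x \<ge> X \<Longrightarrow> f x / x < \<beta>2 + \<epsilon>" unfolding eventually_at_top_linorder by auto
  define X' where "X' = max X 1"
  have "bounded (f ` {0..X'})" by (rule compact_imp_bounded, rule compact_continuous_image) (auto intro: continuous_on_subset[OF f_cont])
  then obtain C0 where C0: "\<forall>y\<in>f ` {0..X'}. norm y \<le> C0" unfolding bounded_iff by blast
  define C where "C = max C0 0"
  have C: "C \<ge> 0" unfolding C_def by simp
  have fu: "f x \<le> (\<beta>2 + \<epsilon>) * x + C" if x: "x \<ge> 0" for x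
  proof (cases "x \<le> X'")
    case True
    then have "f x \<le> C" using C0 x unfolding C_def by force
    moreover have "(\<beta>2 + \<epsilon>) * x \<ge> 0" using beta_nn \<epsilon> x by simp
    ultimately show ?thesis by simp
  next
    case False
    then have "x \<ge> X" "x > 0" unfolding X'_def by auto
    then show ?thesis using X[of x] C by (simp add: divide_less_eq)
  qed
  define R where "R = C * I1 / \<kappa> + 1"
  have "C * I1 / \<kappa> \<ge> 0" using C I1nn \<kappa> by simp
  then have R: "R > 0" unfolding R_def by linarith
  show ?thesis
  proof (rule that[OF R])
    fix h c :: real assume h: "h > 0" and c: "R \<le> c"
    interpret r: rep T \<eta> \<alpha> a f "\<lambda>s. F (U h c (max (s - h) 0))" c "U h c" by (rule U_rep[OF h])
    have c0: "c > 0" using R c by simp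
    have G: "F (U h c (max (s - h) 0)) \<le> (\<beta>2 + \<epsilon>) * c + C" if s: "s \<in> {0..T}" for s
    proof -
      define x where "x = U h c (max (s - h) 0)"
      have xi: "max (s - h) 0 \<in> {0..T}" using s h by auto
      have "x \<le> c" unfolding x_def by (rule r.u_le_c[OF xi])
      then have "max x 0 \<le> c" using c0 by simp
      then have "(\<beta>2 + \<epsilon>) * max x 0 \<le> (\<beta>2 + \<epsilon>) * c" using beta_nn \<epsilon> by (intro mult_left_mono) auto
      moreover have "F x \<le> (\<beta>2 + \<epsilon>) * max x 0 + C" unfolding F_def by (rule fu) simp
      ultimately show ?thesis unfolding x_def by simp
    qed
    have "c * (1 - \<alpha> * \<eta>) - ((\<beta>2 + \<epsilon>) * c + C) * I1 \<le> phi h c"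
      unfolding phi_def by (rule r.large_est[OF G])
    moreover have "c * (1 - \<alpha> * \<eta>) - ((\<beta>2 + \<epsilon>) * c + C) * I1 = \<kappa> * c - C * I1"
      unfolding \<kappa>_def by (simp add: algebra_simps)
    moreover have "\<kappa> * c - C * I1 \<ge> \<kappa> * R - C * I1" using c \<kappa> by simp
    moreover have "\<kappa> * R - C * I1 = \<kappa>" unfolding R_def using \<kappa> by (simp add: algebra_simps)
    ultimately show "phi h c > 0" using \<kappa> by linarith
  qed
qed

end

context bvp
begin

lemma rep_diff:
  assumes r1: "rep T \<eta> \<alpha> a f G1 c1 u1" and r2: "rep T \<eta> \<alpha> a f G2 c2 u2"
    and e: "\<And>s. s \<in> {0..T} \<Longrightarrow> \<bar>G1 s - G2 s\<bar> \<le> e"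
    and B: "B \<ge> 0" "\<And>t. t \<in> {0..T} \<Longrightarrow> \<bar>a t\<bar> \<le> B"
    and t: "t \<in> {0..T}"
  shows "\<bar>u1 t - u2 t\<bar> \<le> \<bar>c1 - c2\<bar> + T * (T * (B * e))"
proof -
  interpret rv: rep T \<eta> \<alpha> a f G1 c1 u1 by (rule r1)
  interpret rw: rep T \<eta> \<alpha> a f G2 c2 u2 by (rule r2)
  have e0: "e \<ge> 0" using e[of 0] T_pos by auto
  have Qd: "\<bar>rv.Q r - rw.Q r\<bar> \<le> B * e * T" if r: "r \<in> {0..T}" for r
  proof -
    have "rv.Q r - rw.Q r = integral {0..r} (\<lambda>s. a s * G1 s - a s * G2 s)"
      unfolding rv.Q_def rw.Q_def
      by (rule integral_diff[symmetric]) (use r int_sub[OF rv.aG_cont] int_sub[OF rw.aG_cont] in auto)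
    also have "\<bar>\<dots>\<bar> \<le> B * e * (r - 0)"
    proof (rule int_abs_bound)
      show "continuous_on {0..r} (\<lambda>s. a s * G1 s - a s * G2 s)"
        by (rule cont_sub[where T=T]) (use r in \<open>auto intro!: continuous_intros rv.aG_cont rw.aG_cont\<close>)
      fix s assume s: "s \<in> {0..r}"
      then have s': "s \<in> {0..T}" using r by auto
      have "\<bar>a s * G1 s - a s * G2 s\<bar> = \<bar>a s\<bar> * \<bar>G1 s - G2 s\<bar>"
        by (simp add: abs_mult[symmetric] right_diff_distrib)
      also have "\<dots> \<le> B * e" by (rule mult_mono) (use B s' e in auto)
      finally show "\<bar>a s * G1 s - a s * G2 s\<bar> \<le> B * e" .
    qed (use r in auto)
    also have "\<dots> \<le> B * e * T" using r B e0 by (intro mult_left_mono) auto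
    finally show ?thesis .
  qed
  have "u1 t - u2 t = (c1 - c2) - integral {0..t} (\<lambda>r. rv.Q r - rw.Q r)"
  proof -
    have "integral {0..t} (\<lambda>r. rv.Q r - rw.Q r) = integral {0..t} rv.Q - integral {0..t} rw.Q"
      by (rule integral_diff) (use t int_sub[OF rv.Q_cont] int_sub[OF rw.Q_cont] in auto)
    then show ?thesis using rv.u_eqQ[OF t] rw.u_eqQ[OF t] by simp
  qed
  moreover have "\<bar>integral {0..t} (\<lambda>r. rv.Q r - rw.Q r)\<bar> \<le> B * e * T * (t - 0)"
    by (rule int_abs_bound) (use t Qd in \<open>auto intro!: continuous_intros cont_sub[OF rv.Q_cont] cont_sub[OF rw.Q_cont]\<close>)
  moreover have "B * e * T * (t - 0) \<le> T * (T * (B * e))"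
  proof -
    have "B * e * T * t \<le> B * e * T * T" by (rule mult_left_mono) (use t B e0 T_pos in auto)
    then show ?thesis by (simp add: algebra_simps)
  qed
  ultimately show ?thesis by linarith
qed

end

context bvp2
begin

lemma approx: obtains \<delta> R where "0 < \<delta>" "\<delta> \<le> R" "\<And>h. h > 0 \<Longrightarrow> \<exists>c\<in>{\<delta>..R}. phi h c = 0"
proof -
  obtain \<delta> where \<delta>: "\<delta> > 0" "\<And>h c. h > 0 \<Longrightarrow> 0 < c \<Longrightarrow> c \<le> \<delta> \<Longrightarrow> phi h c < 0" using small_shoot by blast
  obtain R0 where R0: "R0 > 0" "\<And>h c. h > 0 \<Longrightarrow> R0 \<le> c \<Longrightarrow> phi h c > 0" using large_shoot by blast
  define R where "R = max R0 \<delta>"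
  show ?thesis
  proof (rule that[of \<delta> R])
    show "0 < \<delta>" "\<delta> \<le> R" using \<delta> unfolding R_def by auto
    fix h :: real assume h: "h > 0"
    have "phi h \<delta> \<le> 0" using \<delta>(2)[OF h \<delta>(1)] by simp
    moreover have "0 \<le> phi h R" using R0(2)[OF h] unfolding R_def by (simp add: less_imp_le)
    moreover have "\<delta> \<le> R" unfolding R_def by simp
    ultimately obtain c where "c \<ge> \<delta>" "c \<le> R" "phi h c = 0"
      using IVT'[of "phi h" \<delta> 0 R] phi_cont[OF h] by blast
    then show "\<exists>c\<in>{\<delta>..R}. phi h c = 0" by auto
  qed
qed

lemma zero_props:
  assumes h: "h > 0" and c: "0 < c" "c \<le> R" and z: "phi h c = 0"
    and B: "B \<ge> 0" "\<And>t. t \<in> {0..T} \<Longrightarrow> \<bar>a t\<bar> \<le> B"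
    and Fm: "\<And>x. x \<in> {0..R} \<Longrightarrow> f x \<le> Fm"
  shows "\<And>t. t \<in> {0..T} \<Longrightarrow> 0 \<le> U h c t \<and> U h c t \<le> R"
    and "\<And>t t'. t \<in> {0..T} \<Longrightarrow> t' \<in> {0..T} \<Longrightarrow> \<bar>U h c t - U h c t'\<bar> \<le> Fm * B * T * \<bar>t - t'\<bar>"
    and "U h c 0 = c"
    and "U h c T = \<alpha> * integral {0..\<eta>} (U h c)"
proof -
  interpret r: rep T \<eta> \<alpha> a f "\<lambda>s. F (U h c (max (s - h) 0))" c "U h c" by (rule U_rep[OF h])
  have phi: "\<alpha> * integral {0..\<eta>} (U h c) \<le> U h c T" using z unfolding phi_def by simp
  have uT0: "0 \<le> U h c T" by (rule r.small_nonneg[OF phi])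
  have rng: "0 \<le> U h c t \<and> U h c t \<le> R" if t: "t \<in> {0..T}" for t
    using r.u_antimono[of t T] t uT0 r.u_le_c[OF t] c by auto
  then show "\<And>t. t \<in> {0..T} \<Longrightarrow> 0 \<le> U h c t \<and> U h c t \<le> R" by blast
  show "U h c 0 = c" by (rule r.u0)
  show "U h c T = \<alpha> * integral {0..\<eta>} (U h c)" using z unfolding phi_def by simp
  have G: "F (U h c (max (s - h) 0)) \<le> Fm" if s: "s \<in> {0..T}" for s
  proof -
    have xi: "max (s - h) 0 \<in> {0..T}" using s h by auto
    then show ?thesis using rng[OF xi] F_eq Fm by auto
  qed
  have Qb: "r.Q x \<le> Fm * B * T" if x: "x \<in> {0..T}" for x
  proof -
    have "r.Q x \<le> Fm * A x" by (rule r.Q_upper[OF G x])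
    moreover have "A x \<le> B * T"
    proof -
      have aB: "\<And>t. t \<in> {0..T} \<Longrightarrow> a t \<le> B" using B(2) abs_le_D1 by blast
      have "A x \<le> B * (x - 0)" unfolding A_def by (rule int_bound_le) (use x aB in \<open>auto intro: cont_sub[OF a_cont]\<close>)
      also have "\<dots> \<le> B * T" using x B by (intro mult_left_mono) auto
      finally show ?thesis .
    qed
    moreover have "Fm \<ge> 0" using Fm[of 0] f_nn[of 0] c by auto
    ultimately show ?thesis by (metis mult.assoc mult_left_mono order_trans)
  qed
  have lip: "\<bar>U h c t - U h c t'\<bar> \<le> Fm * B * T * \<bar>t - t'\<bar>" if t: "t \<in> {0..T}" "t' \<in> {0..T}" "t \<le> t'" for t t'
  proof -
    have "U h c t - U h c t' = integral {t..t'} r.Q" using r.u_split[of t t'] t by auto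
    moreover have "integral {t..t'} r.Q \<ge> 0" by (rule integral_nonneg) (use t int_sub[OF r.Q_cont] r.Q_nn in auto)
    moreover have "integral {t..t'} r.Q \<le> Fm * B * T * (t' - t)"
      by (rule int_bound_le) (use t Qb in \<open>auto intro: cont_sub[OF r.Q_cont]\<close>)
    ultimately show ?thesis using t by simp
  qed
  show "\<And>t t'. t \<in> {0..T} \<Longrightarrow> t' \<in> {0..T} \<Longrightarrow> \<bar>U h c t - U h c t'\<bar> \<le> Fm * B * T * \<bar>t - t'\<bar>"
  proof -
    fix t t' assume t: "t \<in> {0..T}" "t' \<in> {0..T}"
    show "\<bar>U h c t - U h c t'\<bar> \<le> Fm * B * T * \<bar>t - t'\<bar>"
    proof (cases "t \<le> t'")
      case True then show ?thesis using lip[OF t] by simp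
    next
      case False then show ?thesis using lip[OF t(2) t(1)] by (simp add: abs_minus_commute)
    qed
  qed
qed

end



lemma arch_small: fixes L \<rho> :: real assumes "\<rho> > 0" "L \<ge> 0" shows "\<exists>N. \<forall>n\<ge>N. L * (1 / real (Suc n)) < \<rho>"
proof -
  obtain N where N: "L / \<rho> < real N" using reals_Archimedean2 by blast
  show ?thesis
  proof (intro exI allI impI)
    fix n assume n: "N \<le> n"
    have "L < \<rho> * real N" using N assms by (simp add: divide_less_eq mult.commute)
    also have "\<dots> \<le> \<rho> * real (Suc n)" using n assms by (intro mult_left_mono) auto
    finally show "L * (1 / real (Suc n)) < \<rho>" by (simp add: divide_less_eq mult.commute)
  qed
qed

lemma eps_zero: fixes x :: real assumes "\<And>e. e > 0 \<Longrightarrow> \<bar>x\<bar> \<le> e" shows "x = 0"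
proof (rule ccontr)
  assume "x \<noteq> 0"
  then have "\<bar>x\<bar> / 2 > 0" by simp
  from assms[OF this] \<open>x \<noteq> 0\<close> show False by simp
qed

context bvp2
begin

lemma exists_solution: "\<exists>u. positive_solution T \<eta> \<alpha> a f u"
proof -
  obtain \<delta> R where \<delta>R: "0 < \<delta>" "\<delta> \<le> R" "\<And>h. h > 0 \<Longrightarrow> \<exists>c\<in>{\<delta>..R}. phi h c = 0" using approx by blast
  obtain B where B: "B \<ge> 0" "\<And>t. t \<in> {0..T} \<Longrightarrow> \<bar>a t\<bar> \<le> B" using a_bnd by blast
  have "bounded (f ` {0..R})" by (rule compact_imp_bounded, rule compact_continuous_image) (auto intro: continuous_on_subset[OF f_cont])
  then obtain Fm0 where Fm0: "\<forall>y\<in>f ` {0..R}. norm y \<le> Fm0" unfolding bounded_iff by blast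
  define Fm where "Fm = max Fm0 0"
  have Fm: "\<And>x. x \<in> {0..R} \<Longrightarrow> f x \<le> Fm" "Fm \<ge> 0" using Fm0 unfolding Fm_def by force+
  define L where "L = Fm * B * T"
  have L: "L \<ge> 0" unfolding L_def using Fm B T_pos by simp
  define hs where "hs n = 1 / real (Suc n)" for n :: nat
  have hs: "hs n > 0" for n unfolding hs_def by simp
  have "\<forall>n. \<exists>c. c \<in> {\<delta>..R} \<and> phi (hs n) c = 0" using \<delta>R(3)[OF hs] by blast
  then obtain cs where cs: "\<And>n. cs n \<in> {\<delta>..R}" "\<And>n. phi (hs n) (cs n) = 0" by metis
  define us where "us n = U (hs n) (cs n)" for n
  have c0: "0 < cs n" "cs n \<le> R" for n using cs(1)[of n] \<delta>R(1) by auto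
  note zp = zero_props[OF hs c0 cs(2) B Fm(1), folded us_def L_def]
  have us_rng: "0 \<le> us n t \<and> us n t \<le> R" if "t \<in> {0..T}" for n t using zp(1) that by blast
  have us_lip: "\<bar>us n t - us n t'\<bar> \<le> L * \<bar>t - t'\<bar>" if "t \<in> {0..T}" "t' \<in> {0..T}" for n t t' using zp(2) that by blast
  have us0: "us n 0 = cs n" for n using zp(3) by blast
  have usT: "us n T = \<alpha> * integral {0..\<eta>} (us n)" for n using zp(4) by blast
  have us_cont: "continuous_on {0..T} (us n)" for n unfolding us_def U_def by (rule it_cont[OF hs])
  have us_rep: "rep T \<eta> \<alpha> a f (\<lambda>s. F (us n (max (s - hs n) 0))) (cs n) (us n)" for n
    unfolding us_def by (rule U_rep[OF hs])
  have AA1: "\<And>n x. x \<in> {0..T} \<Longrightarrow> norm (us n x) \<le> R" using us_rng by fastforce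
  have AA2: "\<exists>d>0. \<forall>n y. y \<in> {0..T} \<and> norm (x - y) < d \<longrightarrow> norm (us n x - us n y) < e"
    if x: "x \<in> {0..T}" and e: "0 < e" for x e :: real
  proof (intro exI[of _ "e / (L + 1)"] conjI allI impI)
    show "e / (L + 1) > 0" using e L by simp
    fix n y assume y: "y \<in> {0..T} \<and> norm (x - y) < e / (L + 1)"
    have "\<bar>us n x - us n y\<bar> \<le> L * \<bar>x - y\<bar>" using us_lip x y by blast
    also have "\<dots> \<le> L * (e / (L + 1))" using y L by (intro mult_left_mono) auto
    also have "\<dots> < (L + 1) * (e / (L + 1))" using e L by (intro mult_strict_right_mono) auto
    also have "\<dots> = e" using L by simp
    finally show "norm (us n x - us n y) < e" by simp
  qed
  obtain g k where g: "continuous_on {0..T} g" and k: "strict_mono (k :: nat \<Rightarrow> nat)"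
    and conv: "\<And>e. 0 < e \<Longrightarrow> \<exists>N. \<forall>n x. n \<ge> N \<and> x \<in> {0..T} \<longrightarrow> norm (us (k n) x - g x) < e"
    using Arzela_Ascoli[of "{0..T}" us R, OF compact_Icc AA1 AA2] by metis
  have conv': "\<exists>N. \<forall>n\<ge>N. \<forall>x\<in>{0..T}. \<bar>us (k n) x - g x\<bar> < e" if e: "e > 0" for e
  proof -
    obtain N where "\<forall>n x. n \<ge> N \<and> x \<in> {0..T} \<longrightarrow> norm (us (k n) x - g x) < e" using conv[OF e] by blast
    then show ?thesis by (intro exI[of _ N]) auto
  qed
  have g_rng: "0 \<le> g x \<and> g x \<le> R" if x: "x \<in> {0..T}" for x
  proof -
    have "- g x \<le> 0 + e \<and> g x \<le> R + e" if e: "e > 0" for e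
    proof -
      obtain N where "\<forall>n\<ge>N. \<forall>x\<in>{0..T}. \<bar>us (k n) x - g x\<bar> < e" using conv'[OF e] by blast
      then have "\<bar>us (k N) x - g x\<bar> < e" using x by blast
      then show ?thesis using us_rng[OF x, of "k N"] by linarith
    qed
    then have h: "\<And>e. 0 < e \<Longrightarrow> - g x \<le> 0 + e" "\<And>e. 0 < e \<Longrightarrow> g x \<le> R + e" by auto
    have "- g x \<le> 0" by (rule field_le_epsilon) (rule h(1))
    moreover have "g x \<le> R" by (rule field_le_epsilon) (rule h(2))
    ultimately show ?thesis by simp
  qed
  have g0: "\<delta> \<le> g 0"
  proof -
    have "\<delta> \<le> g 0 + e" if e: "e > 0" for e
    proof -
      obtain N where "\<forall>n\<ge>N. \<forall>x\<in>{0..T}. \<bar>us (k n) x - g x\<bar> < e" using conv'[OF e] by blast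
      then have "\<bar>us (k N) 0 - g 0\<bar> < e" using T_pos by auto
      then show ?thesis using us0[of "k N"] cs(1)[of "k N"] by auto
    qed
    then show ?thesis by (rule field_le_epsilon)
  qed
  have gB: "g T = \<alpha> * integral {0..\<eta>} g"
  proof -
    have gbe: "\<bar>g T - \<alpha> * integral {0..\<eta>} g\<bar> \<le> e * (1 + \<alpha> * \<eta>)" if e: "e > 0" for e
    proof -
      obtain N where N: "\<forall>n\<ge>N. \<forall>x\<in>{0..T}. \<bar>us (k n) x - g x\<bar> < e" using conv'[OF e] by blast
      define v where "v = us (k N)"
      have vx: "\<bar>v x - g x\<bar> < e" if "x \<in> {0..T}" for x using N that unfolding v_def by blast
      have vc: "continuous_on {0..T} v" unfolding v_def by (rule us_cont)
      have "integral {0..\<eta>} v - integral {0..\<eta>} g = integral {0..\<eta>} (\<lambda>t. v t - g t)"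
        by (rule integral_diff[symmetric]) (use int_sub[OF vc] int_sub[OF g] eta_lt in auto)
      also have "\<bar>\<dots>\<bar> \<le> e * (\<eta> - 0)"
        by (rule int_abs_bound) (use eta_pos eta_lt vx in \<open>auto intro!: continuous_intros cont_sub[OF vc] cont_sub[OF g] less_imp_le\<close>)
      finally have i: "\<bar>integral {0..\<eta>} v - integral {0..\<eta>} g\<bar> \<le> e * \<eta>" by simp
      have vT: "v T = \<alpha> * integral {0..\<eta>} v" unfolding v_def by (rule usT)
      have "g T - \<alpha> * integral {0..\<eta>} g = (g T - v T) + \<alpha> * (integral {0..\<eta>} v - integral {0..\<eta>} g)"
        using vT by (simp add: algebra_simps)
      then have "\<bar>g T - \<alpha> * integral {0..\<eta>} g\<bar> \<le> \<bar>g T - v T\<bar> + \<bar>\<alpha> * (integral {0..\<eta>} v - integral {0..\<eta>} g)\<bar>"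
        by (metis abs_triangle_ineq)
      also have "\<dots> \<le> e + \<alpha> * (e * \<eta>)"
        using vx[of T] T_pos i alpha_pos by (intro add_mono) (auto simp: abs_mult abs_minus_commute)
      finally show ?thesis by (simp add: algebra_simps)
    qed
    have "\<bar>g T - \<alpha> * integral {0..\<eta>} g\<bar> \<le> e" if "e > 0" for e
    proof -
      have p: "1 + \<alpha> * \<eta> > 0" using alpha_pos eta_pos by (simp add: add_pos_pos)
      have "e / (1 + \<alpha> * \<eta>) > 0" using that p by simp
      then have "\<bar>g T - \<alpha> * integral {0..\<eta>} g\<bar> \<le> e / (1 + \<alpha> * \<eta>) * (1 + \<alpha> * \<eta>)"
        using gbe by blast
      then show ?thesis using p by simp
    qed
    then show ?thesis using eps_zero[of "g T - \<alpha> * integral {0..\<eta>} g"] by simp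
  qed
  define ug where "ug t = g 0 - integral {0..t} (\<lambda>r. integral {0..r} (\<lambda>s. a s * F (g s)))" for t
  have g_rep: "rep T \<eta> \<alpha> a f (\<lambda>s. F (g s)) (g 0) ug"
    unfolding rep_def rep_axioms_def using bvp_axioms F_comp[OF g] F_nn ug_def by auto
  interpret rg: rep T \<eta> \<alpha> a f "\<lambda>s. F (g s)" "g 0" ug by (rule g_rep)
  have g_ug: "g t = ug t" if t: "t \<in> {0..T}" for t
  proof -
    have gue: "\<bar>g t - ug t\<bar> \<le> \<epsilon>1 * (1 + T * (T * B))" if \<epsilon>1: "\<epsilon>1 > 0" for \<epsilon>1
    proof -
      have "uniformly_continuous_on {0..R} F"
        by (rule compact_uniformly_continuous) (auto intro: continuous_on_subset[OF F_cont])
      then obtain \<rho>0 where \<rho>0: "\<rho>0 > 0" "\<And>x y. x \<in> {0..R} \<Longrightarrow> y \<in> {0..R} \<Longrightarrow> dist y x < \<rho>0 \<Longrightarrow> dist (F y) (F x) < \<epsilon>1"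
        unfolding uniformly_continuous_on_def using \<epsilon>1 by metis
      define \<rho> where "\<rho> = min \<rho>0 \<epsilon>1"
      have \<rho>: "\<rho> > 0" "\<rho> \<le> \<rho>0" "\<rho> \<le> \<epsilon>1" unfolding \<rho>_def using \<rho>0 \<epsilon>1 by auto
      obtain N1 where N1: "\<forall>n\<ge>N1. \<forall>x\<in>{0..T}. \<bar>us (k n) x - g x\<bar> < \<rho> / 2" using conv'[of "\<rho>/2"] \<rho> by auto
      obtain N2 where N2: "\<forall>n\<ge>N2. L * (1 / real (Suc n)) < \<rho> / 2" using arch_small[of "\<rho>/2" L] \<rho> L by auto
      define n where "n = max N1 N2"
      define m where "m = k n"
      have nm: "n \<le> m" unfolding m_def using k by (simp add: seq_suble)
      have hm: "hs m \<le> 1 / real (Suc n)" unfolding hs_def using nm by (simp add: frac_le)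
      have Lh: "L * hs m < \<rho> / 2"
      proof -
        have "L * hs m \<le> L * (1 / real (Suc n))" using hm L by (intro mult_left_mono) auto
        also have "\<dots> < \<rho> / 2" using N2 unfolding n_def by simp
        finally show ?thesis .
      qed
      have cl: "\<bar>us m x - g x\<bar> < \<rho> / 2" if "x \<in> {0..T}" for x using N1 that unfolding m_def n_def by simp
      have Gd: "\<bar>F (us m (max (s - hs m) 0)) - F (g s)\<bar> \<le> \<epsilon>1" if s: "s \<in> {0..T}" for s
      proof -
        define \<sigma> where "\<sigma> = max (s - hs m) 0"
        have \<sigma>: "\<sigma> \<in> {0..T}" "\<bar>\<sigma> - s\<bar> \<le> hs m" unfolding \<sigma>_def using s hs[of m] by auto
        have "\<bar>us m \<sigma> - us m s\<bar> \<le> L * \<bar>\<sigma> - s\<bar>" by (rule us_lip[OF \<sigma>(1) s])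
        also have "\<dots> \<le> L * hs m" using \<sigma> L by (intro mult_left_mono) auto
        finally have "\<bar>us m \<sigma> - us m s\<bar> < \<rho> / 2" using Lh by simp
        then have "\<bar>us m \<sigma> - g s\<bar> < \<rho>0" using cl[OF s] \<rho> by linarith
        then have "dist (F (us m \<sigma>)) (F (g s)) < \<epsilon>1"
          using \<rho>0(2)[of "g s" "us m \<sigma>"] us_rng[OF \<sigma>(1)] g_rng[OF s] by (auto simp: dist_real_def)
        then show ?thesis unfolding \<sigma>_def dist_real_def by simp
      qed
      have "\<bar>us m t - ug t\<bar> \<le> \<bar>cs m - g 0\<bar> + T * (T * (B * \<epsilon>1))"
        by (rule rep_diff[OF us_rep g_rep Gd B t])
      moreover have "\<bar>cs m - g 0\<bar> < \<rho> / 2" using cl[of 0] us0[of m] T_pos by simp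
      moreover have "\<bar>us m t - g t\<bar> < \<rho> / 2" by (rule cl[OF t])
      ultimately have "\<bar>g t - ug t\<bar> \<le> \<rho> + T * (T * (B * \<epsilon>1))" by linarith
      also have "\<dots> \<le> \<epsilon>1 + T * (T * (B * \<epsilon>1))" using \<rho> by simp
      also have "\<dots> = \<epsilon>1 * (1 + T * (T * B))" by (simp add: algebra_simps)
      finally show ?thesis .
    qed
    have "\<bar>g t - ug t\<bar> \<le> e" if "e > 0" for e
    proof -
      have p: "1 + T * (T * B) > 0" using T_pos B by (simp add: add_pos_nonneg)
      have "e / (1 + T * (T * B)) > 0" using that p by simp
      then have "\<bar>g t - ug t\<bar> \<le> e / (1 + T * (T * B)) * (1 + T * (T * B))"
        using gue by blast
      then show ?thesis using p by simp
    qed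
    then show ?thesis using eps_zero[of "g t - ug t"] by simp
  qed
  show ?thesis
  proof (intro exI[of _ ug])
    have C2: "C2_with T ug (\<lambda>t. - rg.Q t) (\<lambda>t. - (a t * F (g t)))"
      unfolding C2_with_def
    proof (intro conjI ballI)
      fix t assume t: "t \<in> {0..T}"
      show "(ug has_real_derivative - rg.Q t) (at t within {0..T})" by (rule rg.u_deriv[OF t])
      show "((\<lambda>t. - rg.Q t) has_real_derivative - (a t * F (g t))) (at t within {0..T})"
        by (rule DERIV_minus[OF rg.Q_deriv[OF t]])
    next
      show "continuous_on {0..T} (\<lambda>t. - (a t * F (g t)))"
        by (intro continuous_intros a_cont F_comp[OF g])
    qed
    have ode: "- (a t * F (g t)) + a t * f (ug t) = 0" if "0 < t \<and> t < T" for t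
    proof -
      have t: "t \<in> {0..T}" using that by auto
      show ?thesis using g_ug[OF t] g_rng[OF t] F_eq by simp
    qed
    have bc: "ug T = \<alpha> * integral {0..\<eta>} ug"
    proof -
      have "integral {0..\<eta>} ug = integral {0..\<eta>} g"
        by (rule integral_cong) (use g_ug eta_lt in auto)
      then show ?thesis using gB g_ug[of T] T_pos by simp
    qed
    have nn: "\<forall>t\<in>{0..T}. 0 \<le> ug t" using g_ug g_rng by auto
    have nz: "\<exists>t\<in>{0..T}. ug t \<noteq> 0" using g_ug[of 0] g0 \<delta>R(1) T_pos by (intro bexI[of _ 0]) auto
    show "positive_solution T \<eta> \<alpha> a f ug"
      unfolding positive_solution_def
    proof (intro conjI)
      show "\<exists>u1 u2. C2_with T ug u1 u2 \<and> (\<forall>t. 0 < t \<and> t < T \<longrightarrow> u2 t + a t * f (ug t) = 0) \<and> u1 0 = 0 \<and> ug T = \<alpha> * integral {0..\<eta>} ug"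
        by (rule exI[of _ "\<lambda>t. - rg.Q t"], rule exI[of _ "\<lambda>t. - (a t * F (g t))"]) (use C2 ode bc rg.Q0 in auto)
    qed (use nn nz in auto)
  qed
qed

end



lemma int_zero_imp:
  fixes g :: "real \<Rightarrow> real"
  assumes "x < y" "continuous_on {x..y} g" "\<And>t. t \<in> {x..y} \<Longrightarrow> g t \<ge> 0" "integral {x..y} g = 0" "z \<in> {x..y}"
  shows "g z = 0"
proof -
  have "(g has_integral 0) {x..y}" using integrable_integral[OF integrable_continuous_interval[OF assms(2)]] assms(4) by simp
  then show ?thesis
    using has_integral_0_cbox_imp_0[of x y g z] assms by auto
qed

context bvp
begin

lemma Dp_pos: assumes t0: "t0 \<in> {0..T}" "a t0 > 0" shows "Dp > 0"
proof -
  have AT: "A T > 0"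
  proof (rule ccontr)
    assume "\<not> A T > 0"
    then have "A T = 0" using A_nn[of T] T_pos by simp
    then have i0: "integral {0..T} a = 0" unfolding A_def .
    have "a t0 = 0" by (rule int_zero_imp[of 0 T a t0]) (use T_pos a_cont a_nn t0 i0 in auto)
    then show False using t0 by simp
  qed
  have i1: "integral {\<eta>..T} A > 0"
  proof (rule ccontr)
    assume "\<not> integral {\<eta>..T} A > 0"
    moreover have "integral {\<eta>..T} A \<ge> 0" by (rule integral_nonneg) (use int_sub[OF A_cont] A_nn eta_pos in auto)
    ultimately have "integral {\<eta>..T} A = 0" by simp
    then have i0: "integral {\<eta>..T} A = 0" .
    have "A T = 0" by (rule int_zero_imp[of \<eta> T A T]) (use A_nn eta_pos eta_lt i0 cont_sub[OF A_cont, of \<eta> T] in auto)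
    then show False using AT by simp
  qed
  have "integral {0..\<eta>} (\<lambda>x. x * A x) \<ge> 0"
    by (rule integral_nonneg) (use eta_lt A_nn in \<open>auto intro!: int_sub[where T=T] continuous_intros A_cont\<close>)
  then have "\<alpha> * integral {0..\<eta>} (\<lambda>x. x * A x) \<ge> 0" using alpha_pos by simp
  then show ?thesis unfolding Dp_def using i1 by simp
qed

lemma gamma_le1: "gamma_c T \<eta> \<alpha> \<le> 1"
proof -
  have pos: "T - \<alpha> * \<eta>^2 > 0"
  proof -
    have "\<alpha> * \<eta>^2 = (\<alpha> * \<eta>) * \<eta>" by (simp add: power2_eq_square)
    also have "\<dots> < 1 * \<eta>" by (rule mult_strict_right_mono) (use alpha_eta eta_pos in auto)
    finally show ?thesis using eta_lt by simp
  qed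
  have "\<alpha> * \<eta> * T \<le> T" using alpha_eta T_pos by simp
  then have "\<alpha> * \<eta> * (T - \<eta>) \<le> T - \<alpha> * \<eta>^2" by (simp add: algebra_simps power2_eq_square)
  then show ?thesis unfolding gamma_c_def using pos by simp
qed

end

theorem corollary5p3:
  fixes T \<eta> \<alpha> \<alpha>2 \<beta>2 \<theta>1 \<theta>2 :: real
    and f a :: "real \<Rightarrow> real"
  assumes "T > 0" and "0 < \<eta>" and "\<eta> < T"
    and "0 < \<alpha>" and "\<alpha> < 1 / \<eta>"
    and "continuous_on {0..} f" and "\<forall>u\<ge>0. f u \<ge> 0"
    and "continuous_on {0..T} a" and "\<forall>t\<in>{0..T}. a t \<ge> 0"
    and "\<exists>t0\<in>{0..T}. a t0 > 0"
    and "((\<lambda>u. f u / u) \<longlongrightarrow> \<alpha>2) (at_right 0)"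
    and "((\<lambda>u. f u / u) \<longlongrightarrow> \<beta>2) at_top"
    and "\<theta>2 \<ge> 1" and "\<alpha>2 > \<theta>2 / gamma_c T \<eta> \<alpha> * Lambda2 T \<eta> \<alpha> a"
    and "0 < \<theta>1" and "\<theta>1 \<le> 1" and "0 \<le> \<beta>2" and "\<beta>2 < \<theta>1 * Lambda1 T \<eta> \<alpha> a"
  shows "\<exists>u. positive_solution T \<eta> \<alpha> a f u"
proof -
  have ae: "\<alpha> * \<eta> < 1" using assms(2,5) by (simp add: less_divide_eq mult.commute)
  interpret b: bvp T \<eta> \<alpha> a f
    by unfold_locales (use assms ae in auto)
  define \<gamma> where "\<gamma> = gamma_c T \<eta> \<alpha>"
  have \<gamma>: "\<gamma> > 0" "\<gamma> \<le> 1" unfolding \<gamma>_def using b.gamma_pos b.gamma_le1 by auto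
  obtain t0 where t0: "t0 \<in> {0..T}" "a t0 > 0" using assms(10) by blast
  have Dp: "b.Dp > 0" by (rule b.Dp_pos[OF t0])
  have I1nn: "b.I1 \<ge> 0" unfolding b.I1_def by (rule integral_nonneg) (use int_sub[OF b.A_cont] b.A_nn in auto)
  have L1: "Lambda1 T \<eta> \<alpha> a = (1 - \<alpha> * \<eta>) / b.I1" unfolding Lambda1_def b.I1_eq ..
  have L2: "Lambda2 T \<eta> \<alpha> a = (1 - \<alpha> * \<eta>) / (\<gamma> * b.Dp)" unfolding Lambda2_def b.D_eq \<gamma>_def ..
  have large: "\<beta>2 * b.I1 < 1 - \<alpha> * \<eta>"
  proof (cases "b.I1 = 0")
    case True then show ?thesis using ae by simp
  next
    case False
    then have I1p: "b.I1 > 0" using I1nn by simp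
    have "\<theta>1 * Lambda1 T \<eta> \<alpha> a \<le> 1 * Lambda1 T \<eta> \<alpha> a"
      using assms(16) L1 I1p ae by (intro mult_right_mono) auto
    then have "\<beta>2 < (1 - \<alpha> * \<eta>) / b.I1" using assms(18) L1 by simp
    then show ?thesis using I1p by (simp add: less_divide_eq)
  qed
  have small: "\<alpha>2 * \<gamma> * b.Dp > 1 - \<alpha> * \<eta>"
  proof -
    have L2p: "Lambda2 T \<eta> \<alpha> a > 0" unfolding L2 using \<gamma> Dp ae by simp
    have "1 / \<gamma> * Lambda2 T \<eta> \<alpha> a \<le> \<theta>2 / \<gamma> * Lambda2 T \<eta> \<alpha> a"
      using assms(13) \<gamma> L2p by (intro mult_right_mono divide_right_mono) auto
    then have "\<alpha>2 > Lambda2 T \<eta> \<alpha> a / \<gamma>" using assms(14) \<gamma>_def by simp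
    then have "\<alpha>2 > (1 - \<alpha> * \<eta>) / (\<gamma> * \<gamma> * b.Dp)" unfolding L2 by (simp add: mult.commute mult.left_commute)
    then have s: "\<alpha>2 * (\<gamma> * \<gamma> * b.Dp) > 1 - \<alpha> * \<eta>" using \<gamma> Dp by (simp add: divide_less_eq)
    have a2: "\<alpha>2 > 0" using s \<gamma> Dp ae
      by (smt (verit) mult_nonpos_nonneg mult_pos_pos)
    have "\<alpha>2 * (\<gamma> * \<gamma> * b.Dp) \<le> \<alpha>2 * (\<gamma> * b.Dp)"
      using a2 \<gamma> Dp by (intro mult_left_mono) (auto simp: mult_le_cancel_right1 mult.assoc mult_right_le_one_le)
    then show ?thesis using s by (simp add: mult.assoc)
  qed
  interpret b2: bvp2 T \<eta> \<alpha> a f \<alpha>2 \<beta>2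
    by unfold_locales (use assms large small Dp \<gamma>_def in auto)
  show ?thesis by (rule b2.exists_solution)
qed


end
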